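(* Let $A$, $\Omega$ be finite nonempty sets and $\mu_0$ a prior on $\Omega$ with $\mu_0(\omega)>0$ for all $\omega$. The Lebesgue measure of the set of felicitous environments in $[0,1]^{2|A||\Omega|}$ is at least $\frac{1}{|A|^{|A|}}$.
   Context: $A=\{a_1,\dots,a_{|A|}\}$. An environment is a pair of functions $u_S,u_R:A\times\Omega\to[0,1]$, identified with a point of $[0,1]^{2|A||\Omega|}$. For each $i$, let $\Omega_i^{u_S}=\{\omega: a_i\in\arg\max_{a\in A}u_S(a,\omega)\}$. The environment is felicitous if for every $i$ with $\Omega_i^{u_S}\neq\emptyset$, $a_i\in\arg\max_{a\in A}\sum_{\omega\in\Omega_i^{u_S}}\mu_0(\omega)u_R(a,\omega)$. *)

theory Defs
  imports "HOL-Analysis.Analysis"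
begin

definition argmax_set :: "('a \<Rightarrow> real) \<Rightarrow> 'a set" where
  "argmax_set f = {a. \<forall>b. f b \<le> f a}"

definition Omega_of :: "('a \<Rightarrow> 'w \<Rightarrow> real) \<Rightarrow> 'a \<Rightarrow> 'w set" where
  "Omega_of uS a = {\<omega>. a \<in> argmax_set (\<lambda>b. uS b \<omega>)}"

definition felicitous ::
  "('w \<Rightarrow> real) \<Rightarrow> ('a \<Rightarrow> 'w \<Rightarrow> real) \<Rightarrow> ('a \<Rightarrow> 'w \<Rightarrow> real) \<Rightarrow> bool" where
  "felicitous \<mu>0 uS uR \<longleftrightarrow>
     (\<forall>a. Omega_of uS a \<noteq> {} \<longrightarrow>
        a \<in> argmax_set (\<lambda>b. \<Sum>\<omega>\<in>Omega_of uS a. \<mu>0 \<omega> * uR b \<omega>))"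

text \<open>An environment is a point of [0,1]^{2|A||Omega|}, indexed by
  (A x Omega) + (A x Omega): Inl-coordinates give u_S, Inr-coordinates give u_R.\<close>
definition felicitous_envs ::
  "('w \<Rightarrow> real) \<Rightarrow> (('a \<times> 'w) + ('a \<times> 'w) \<Rightarrow> real) set" where
  "felicitous_envs \<mu>0 = {e. (\<forall>i. e i \<in> {0..1}) \<and>
      felicitous \<mu>0 (\<lambda>a \<omega>. e (Inl (a, \<omega>))) (\<lambda>a \<omega>. e (Inr (a, \<omega>)))}"

end

theory Submission
  imports Defs "HOL-Library.Cardinality"
begin


interpretation PL: product_sigma_finite "\<lambda>_::'i. (lborel::real measure)" by standard

lemma pim_perm:
  fixes p :: "'i::finite \<Rightarrow> 'i"
  assumes "bij p"
  shows "distr (Pi\<^sub>M UNIV (\<lambda>_. lborel::real measure)) (Pi\<^sub>M UNIV (\<lambda>_. lborel)) (\<lambda>e. e \<circ> p)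
       = Pi\<^sub>M UNIV (\<lambda>_. lborel)"
proof (rule PL.PiM_eqI)
  show "finite (UNIV::'i set)" by simp
  show "sets (distr (Pi\<^sub>M UNIV (\<lambda>_. lborel::real measure)) (Pi\<^sub>M UNIV (\<lambda>_. lborel)) (\<lambda>e. e \<circ> p)) = sets (Pi\<^sub>M UNIV (\<lambda>_. lborel))" by simp
  fix A :: "'i \<Rightarrow> real set" assume A: "\<And>i. i \<in> UNIV \<Longrightarrow> A i \<in> sets lborel"
  have meas: "(\<lambda>e. e \<circ> p) \<in> measurable (Pi\<^sub>M UNIV (\<lambda>_. lborel::real measure)) (Pi\<^sub>M UNIV (\<lambda>_. lborel))"
    unfolding comp_def by (rule measurable_PiM_single') (auto simp: space_PiM)
  have pre: "(\<lambda>e. e \<circ> p) -` Pi\<^sub>E UNIV A \<inter> space (Pi\<^sub>M UNIV (\<lambda>_. lborel::real measure)) = Pi\<^sub>E UNIV (\<lambda>j. A (inv p j))"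
    using assms by (auto simp: space_PiM PiE_def Pi_def bij_inv_eq_iff) (metis bij_inv_eq_iff)+
  have "emeasure (distr (Pi\<^sub>M UNIV (\<lambda>_. lborel::real measure)) (Pi\<^sub>M UNIV (\<lambda>_. lborel)) (\<lambda>e. e \<circ> p)) (Pi\<^sub>E UNIV A)
     = emeasure (Pi\<^sub>M UNIV (\<lambda>_. lborel::real measure)) (Pi\<^sub>E UNIV (\<lambda>j. A (inv p j)))"
    using A by (subst emeasure_distr[OF meas]) (auto simp: pre)
  also have "\<dots> = (\<Prod>j\<in>UNIV. emeasure lborel (A (inv p j)))"
    using A by (subst PL.emeasure_PiM) auto
  also have "\<dots> = (\<Prod>i\<in>UNIV. emeasure lborel (A i))"
    using prod.reindex[of "inv p" UNIV "\<lambda>i. emeasure lborel (A i)"] assms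
    by (simp add: bij_imp_bij_inv bij_is_inj bij_is_surj)
  finally show "emeasure (distr (Pi\<^sub>M UNIV (\<lambda>_. lborel::real measure)) (Pi\<^sub>M UNIV (\<lambda>_. lborel)) (\<lambda>e. e \<circ> p)) (Pi\<^sub>E UNIV A) = (\<Prod>i\<in>UNIV. emeasure lborel (A i))" .
qed


lemma tie_null:
  fixes i j :: "'i::finite"
  assumes "i \<noteq> j"
  shows "emeasure (Pi\<^sub>M UNIV (\<lambda>_. lborel::real measure)) {e. e i = e j} = 0"
proof -
  let ?J = "UNIV - {i}"
  have U: "(UNIV::'i set) = {i} \<union> ?J" by auto
  have A: "{e. e i = e j} \<in> sets (Pi\<^sub>M ({i} \<union> ?J) (\<lambda>_. lborel::real measure))"
  proof -
    have "{e \<in> space (Pi\<^sub>M UNIV (\<lambda>_. lborel::real measure)). e i = e j} \<in> sets (Pi\<^sub>M UNIV (\<lambda>_. lborel::real measure))"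
      by (intro borel_measurable_eq) (auto intro: measurable_component_singleton)
    then show ?thesis by (simp add: U[symmetric] space_PiM)
  qed
  have inner: "emeasure (Pi\<^sub>M ?J (\<lambda>_. lborel::real measure)) ((\<lambda>y. merge {i} ?J (x, y)) -` {e. e i = e j} \<inter> space (Pi\<^sub>M ?J (\<lambda>_. lborel))) = 0"
    for x :: "'i \<Rightarrow> real"
  proof -
    have "(\<lambda>y. merge {i} ?J (x, y)) -` {e. e i = e j} \<inter> space (Pi\<^sub>M ?J (\<lambda>_. lborel::real measure))
        = Pi\<^sub>E ?J (\<lambda>k. if k = j then {x i} else UNIV)"
      using assms by (auto simp: merge_def space_PiM PiE_def Pi_def extensional_def split: if_splits)
    moreover have "emeasure (Pi\<^sub>M ?J (\<lambda>_. lborel::real measure)) (Pi\<^sub>E ?J (\<lambda>k. if k = j then {x i} else UNIV)) = 0"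
    proof -
      have "emeasure (Pi\<^sub>M ?J (\<lambda>_. lborel::real measure)) (Pi\<^sub>E ?J (\<lambda>k. if k = j then {x i} else UNIV))
          = (\<Prod>k\<in>?J. emeasure lborel (if k = j then {x i} else UNIV))"
        by (rule PL.emeasure_PiM) auto
      also have "\<dots> = 0"
        using assms by (intro prod_zero) (auto intro!: bexI[where x=j])
      finally show ?thesis .
    qed
    ultimately show ?thesis by simp
  qed
  have "emeasure (Pi\<^sub>M ({i} \<union> ?J) (\<lambda>_. lborel::real measure)) {e. e i = e j} = 0"
  proof -
    have "emeasure (Pi\<^sub>M ({i} \<union> ?J) (\<lambda>_. lborel::real measure)) {e. e i = e j} = 
      (\<integral>\<^sup>+x. emeasure (Pi\<^sub>M ?J (\<lambda>_. lborel::real measure)) ((\<lambda>y. merge {i} ?J (x, y)) -` {e. e i = e j} \<inter> space (Pi\<^sub>M ?J (\<lambda>_. lborel))) \<partial>Pi\<^sub>M {i} (\<lambda>_. lborel))"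
      by (rule PL.emeasure_fold_integral[OF _ _ _ A]) auto
    also have "\<dots> = 0" by (simp only: inner) simp
    finally show ?thesis .
  qed
  then show ?thesis using U by simp
qed


lemma felicitous_envs_alt:
  "felicitous_envs \<mu>0 = {e. (\<forall>i. 0 \<le> e i \<and> e i \<le> 1) \<and>
     (\<forall>a. (\<exists>\<omega>. \<forall>b. e (Inl (b, \<omega>)) \<le> e (Inl (a, \<omega>))) \<longrightarrow>
        (\<forall>b. (\<Sum>\<omega>\<in>UNIV. if (\<forall>b'. e (Inl (b', \<omega>)) \<le> e (Inl (a, \<omega>))) then \<mu>0 \<omega> * e (Inr (b, \<omega>)) else 0)
           \<le> (\<Sum>\<omega>\<in>UNIV. if (\<forall>b'. e (Inl (b', \<omega>)) \<le> e (Inl (a, \<omega>))) then \<mu>0 \<omega> * e (Inr (a, \<omega>)) else 0)))}"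
  for \<mu>0 :: "'w::finite \<Rightarrow> real"
proof -
  have *: "(\<Sum>\<omega>\<in>Omega_of uS a. f \<omega>) = (\<Sum>\<omega>\<in>UNIV. if (\<forall>b'. uS b' \<omega> \<le> uS a \<omega>) then f \<omega> else 0)"
    for uS :: "'a \<Rightarrow> 'w \<Rightarrow> real" and a and f :: "'w \<Rightarrow> real"
    by (simp add: sum.If_cases Omega_of_def argmax_set_def)
  show ?thesis
    unfolding felicitous_envs_def felicitous_def
    by (simp add: * ) (simp add: Omega_of_def argmax_set_def)
qed

lemma comp_meas[measurable]: "(\<lambda>x. x i) \<in> borel_measurable (Pi\<^sub>M UNIV (\<lambda>_. lborel::real measure))"
  using measurable_component_singleton[of i UNIV "\<lambda>_. lborel::real measure"] by simp

lemma comp_meas2[measurable]: "(\<lambda>x. x i) \<in> borel_measurable (Pi\<^sub>M UNIV (\<lambda>_. borel::real measure))"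
  using measurable_component_singleton[of i UNIV "\<lambda>_. borel::real measure"] by simp

lemma pred_le_comp[measurable]: "Measurable.pred (Pi\<^sub>M UNIV (\<lambda>_. lborel::real measure)) (\<lambda>x. x i \<le> x j)"
  unfolding pred_def by (intro borel_measurable_le comp_meas)

lemma pred_le_sum[measurable]: "(f::_ \<Rightarrow> real) \<in> borel_measurable (Pi\<^sub>M UNIV (\<lambda>_. lborel::real measure)) \<Longrightarrow>
  (g::_ \<Rightarrow> real) \<in> borel_measurable (Pi\<^sub>M UNIV (\<lambda>_. lborel::real measure)) \<Longrightarrow>
  Measurable.pred (Pi\<^sub>M UNIV (\<lambda>_. lborel::real measure)) (\<lambda>x. f x \<le> g x)"
  unfolding pred_def by (rule borel_measurable_le)

lemma felicitous_envs_sets: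
  "(felicitous_envs \<mu>0 :: (('a::finite \<times> 'w) + ('a \<times> 'w) \<Rightarrow> real) set) \<in> sets (Pi\<^sub>M UNIV (\<lambda>_. lborel::real measure))"
  for \<mu>0 :: "'w::finite \<Rightarrow> real"
proof -
  have "{e \<in> space (Pi\<^sub>M UNIV (\<lambda>_. lborel::real measure)). (\<forall>i. 0 \<le> e i \<and> e i \<le> 1) \<and>
     (\<forall>a. (\<exists>\<omega>. \<forall>b. e (Inl (b, \<omega>)) \<le> e (Inl (a, \<omega>))) \<longrightarrow>
        (\<forall>b. (\<Sum>\<omega>\<in>UNIV. if (\<forall>b'. e (Inl (b', \<omega>)) \<le> e (Inl (a, \<omega>))) then \<mu>0 \<omega> * e (Inr (b, \<omega>)) else 0)
           \<le> (\<Sum>\<omega>\<in>UNIV. if (\<forall>b'. e (Inl (b', \<omega>)) \<le> e (Inl (a::'a, \<omega>))) then \<mu>0 \<omega> * e (Inr (a, \<omega>)) else 0)))}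
    \<in> sets (Pi\<^sub>M UNIV (\<lambda>_. lborel::real measure))"
    by measurable
  then show ?thesis by (simp add: felicitous_envs_alt space_PiM)
qed


definition sw :: "'a \<Rightarrow> 'a \<Rightarrow> 'a \<Rightarrow> 'a" where
  "sw x y b = (if b = x then y else if b = y then x else b)"

definition permI :: "('w \<Rightarrow> 'a) \<Rightarrow> ('a \<Rightarrow> 'a) \<Rightarrow> ('a \<times> 'w) + ('a \<times> 'w) \<Rightarrow> ('a \<times> 'w) + ('a \<times> 'w)" where
  "permI s c i = (case i of Inl x \<Rightarrow> Inl x | Inr (b, \<omega>) \<Rightarrow> Inr (sw (s \<omega>) (c (s \<omega>)) b, \<omega>))"

lemma sw_sw[simp]: "sw x y (sw x y b) = b"
  by (simp add: sw_def)

lemma permI_invol[simp]: "permI s c (permI s c i) = i"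
  by (cases i) (auto simp: permI_def)

lemma bij_permI: "bij (permI s c)"
  by (metis bijI' permI_invol)

definition cube :: "('i \<Rightarrow> real) set" where
  "cube = {e. \<forall>i. 0 \<le> e i \<and> e i \<le> 1}"

definition Rs :: "('w \<Rightarrow> 'a) \<Rightarrow> (('a \<times> 'w) + ('a \<times> 'w) \<Rightarrow> real) set" where
  "Rs s = {e \<in> cube. \<forall>\<omega> b. b \<noteq> s \<omega> \<longrightarrow> e (Inl (b, \<omega>)) < e (Inl (s \<omega>, \<omega>))}"

lemma Omega_of_Rs:
  assumes "e \<in> Rs s"
  shows "Omega_of (\<lambda>a \<omega>. e (Inl (a, \<omega>))) a = {\<omega>. s \<omega> = a}"
  using assms unfolding Rs_def Omega_of_def argmax_set_def
  apply (auto simp: less_imp_le)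
   apply (metis not_less)
  by (metis less_imp_le order_refl)

lemma Rs_perm: "e \<in> Rs s \<Longrightarrow> e \<circ> permI s c \<in> Rs s"
  unfolding Rs_def cube_def by (auto simp: permI_def)

lemma Rs_cover:
  fixes \<mu>0 :: "'w::finite \<Rightarrow> real"
  assumes e: "e \<in> Rs (s :: 'w \<Rightarrow> 'a::finite)"
  shows "\<exists>c. e \<circ> permI s c \<in> felicitous_envs \<mu>0"
proof -
  define V where "V a b = (\<Sum>\<omega>\<in>{\<omega>. s \<omega> = a}. \<mu>0 \<omega> * e (Inr (b, \<omega>)))" for a b
  have "\<exists>m. \<forall>b. V a b \<le> V a m" for a
  proof -
    have "Max (range (V a)) \<in> range (V a)" by (intro Max_in) auto
    then obtain m where "V a m = Max (range (V a))" by (metis imageE)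
    moreover have "V a b \<le> Max (range (V a))" for b by (intro Max_ge) auto
    ultimately show ?thesis by metis
  qed
  then obtain c where c: "\<And>a b. V a b \<le> V a (c a)" by metis
  have eR: "e \<circ> permI s c \<in> Rs s" by (rule Rs_perm[OF e])
  have Om: "Omega_of (\<lambda>a \<omega>. (e \<circ> permI s c) (Inl (a, \<omega>))) a = {\<omega>. s \<omega> = a}" for a
    by (rule Omega_of_Rs[OF eR])
  have key: "(\<Sum>\<omega>\<in>{\<omega>. s \<omega> = a}. \<mu>0 \<omega> * (e \<circ> permI s c) (Inr (b, \<omega>))) = V a (sw a (c a) b)" for a b
    unfolding V_def by (intro sum.cong) (auto simp: permI_def)
  have "felicitous \<mu>0 (\<lambda>a \<omega>. (e \<circ> permI s c) (Inl (a, \<omega>))) (\<lambda>a \<omega>. (e \<circ> permI s c) (Inr (a, \<omega>)))"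
    unfolding felicitous_def argmax_set_def Om
  proof (intro allI impI CollectI)
    fix a b
    have h: "sw a (c a) a = c a" by (simp add: sw_def)
    show "(\<Sum>\<omega>\<in>{\<omega>. s \<omega> = a}. \<mu>0 \<omega> * (e \<circ> permI s c) (Inr (b, \<omega>)))
       \<le> (\<Sum>\<omega>\<in>{\<omega>. s \<omega> = a}. \<mu>0 \<omega> * (e \<circ> permI s c) (Inr (a, \<omega>)))"
      unfolding key h by (rule c)
  qed
  moreover have "\<forall>i. (e \<circ> permI s c) i \<in> {0..1}"
    using eR by (auto simp: Rs_def cube_def)
  ultimately show ?thesis unfolding felicitous_envs_def by blast
qed


lemma ex_argmax: "\<exists>m. \<forall>b. f b \<le> f m" for f :: "'a::finite \<Rightarrow> real"
proof -
  have "Max (range f) \<in> range f" by (intro Max_in) auto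
  then obtain m where "f m = Max (range f)" by (metis imageE)
  moreover have "f b \<le> Max (range f)" for b by (intro Max_ge) auto
  ultimately show ?thesis by metis
qed

lemma meas_comp:
  "(\<lambda>e. e \<circ> p) \<in> measurable (Pi\<^sub>M UNIV (\<lambda>_. lborel::real measure)) (Pi\<^sub>M UNIV (\<lambda>_. lborel))"
  for p :: "'i::finite \<Rightarrow> 'i"
  unfolding comp_def by (rule measurable_PiM_single') (auto simp: space_PiM)

lemma emeasure_perm:
  fixes p :: "'i::finite \<Rightarrow> 'i"
  assumes "bij p" "X \<in> sets (Pi\<^sub>M UNIV (\<lambda>_. lborel::real measure))"
  shows "emeasure (Pi\<^sub>M UNIV (\<lambda>_. lborel::real measure)) ((\<lambda>e. e \<circ> p) -` X) = emeasure (Pi\<^sub>M UNIV (\<lambda>_. lborel)) X"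
proof -
  have "emeasure (Pi\<^sub>M UNIV (\<lambda>_. lborel::real measure)) X
    = emeasure (distr (Pi\<^sub>M UNIV (\<lambda>_. lborel::real measure)) (Pi\<^sub>M UNIV (\<lambda>_. lborel)) (\<lambda>e. e \<circ> p)) X"
    using pim_perm[OF assms(1)] by simp
  also have "\<dots> = emeasure (Pi\<^sub>M UNIV (\<lambda>_. lborel::real measure)) ((\<lambda>e. e \<circ> p) -` X \<inter> space (Pi\<^sub>M UNIV (\<lambda>_. lborel)))"
    by (rule emeasure_distr[OF meas_comp assms(2)])
  finally show ?thesis by (simp add: space_PiM)
qed

lemma sets_perm:
  fixes p :: "'i::finite \<Rightarrow> 'i"
  assumes "X \<in> sets (Pi\<^sub>M UNIV (\<lambda>_. lborel::real measure))"
  shows "(\<lambda>e. e \<circ> p) -` X \<in> sets (Pi\<^sub>M UNIV (\<lambda>_. lborel::real measure))"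
  using measurable_sets[OF meas_comp assms, of p] by (simp add: space_PiM)

lemma cube_sets: "(cube :: ('i::finite \<Rightarrow> real) set) \<in> sets (Pi\<^sub>M UNIV (\<lambda>_. lborel::real measure))"
  and cube_measure: "emeasure (Pi\<^sub>M UNIV (\<lambda>_. lborel::real measure)) (cube :: ('i::finite \<Rightarrow> real) set) = 1"
proof -
  have eq: "(cube :: ('i \<Rightarrow> real) set) = Pi\<^sub>E UNIV (\<lambda>_. {0..1})"
    by (auto simp: cube_def PiE_def Pi_def)
  show "(cube :: ('i::finite \<Rightarrow> real) set) \<in> sets (Pi\<^sub>M UNIV (\<lambda>_. lborel::real measure))"
    unfolding eq by (rule sets_PiM_I_finite) auto
  show "emeasure (Pi\<^sub>M UNIV (\<lambda>_. lborel::real measure)) (cube :: ('i::finite \<Rightarrow> real) set) = 1"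
    unfolding eq by (subst PL.emeasure_PiM) auto
qed

lemma Rs_sets: "Rs (s :: 'w::finite \<Rightarrow> 'a::finite) \<in> sets (Pi\<^sub>M UNIV (\<lambda>_. lborel::real measure))"
proof -
  have "{e \<in> space (Pi\<^sub>M UNIV (\<lambda>_. lborel::real measure)).
      (\<forall>\<omega> b. b \<noteq> s \<omega> \<longrightarrow> \<not> e (Inl (s \<omega>, \<omega>) :: ('a \<times> 'w) + ('a \<times> 'w)) \<le> e (Inl (b, \<omega>)))} \<in> sets (Pi\<^sub>M UNIV (\<lambda>_. lborel::real measure))"
    by measurable
  then have "cube \<inter> {e \<in> space (Pi\<^sub>M UNIV (\<lambda>_. lborel::real measure)).
      (\<forall>\<omega> b. b \<noteq> s \<omega> \<longrightarrow> \<not> e (Inl (s \<omega>, \<omega>) :: ('a \<times> 'w) + ('a \<times> 'w)) \<le> e (Inl (b, \<omega>)))} \<in> sets (Pi\<^sub>M UNIV (\<lambda>_. lborel::real measure))"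
    using cube_sets by (intro sets.Int)
  moreover have "Rs s = cube \<inter> {e \<in> space (Pi\<^sub>M UNIV (\<lambda>_. lborel::real measure)).
      (\<forall>\<omega> b. b \<noteq> s \<omega> \<longrightarrow> \<not> e (Inl (s \<omega>, \<omega>) :: ('a \<times> 'w) + ('a \<times> 'w)) \<le> e (Inl (b, \<omega>)))}"
    by (auto simp: Rs_def space_PiM not_le)
  ultimately show ?thesis by simp
qed

lemma Rs_disj: "disjoint_family_on (\<lambda>s::'w \<Rightarrow> 'a. Rs s) UNIV"
  unfolding disjoint_family_on_def
proof (intro ballI impI)
  fix s t :: "'w \<Rightarrow> 'a" assume "s \<noteq> t"
  then obtain \<omega> where w: "s \<omega> \<noteq> t \<omega>" by auto
  show "Rs s \<inter> Rs t = {}"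
  proof (rule ccontr)
    assume "Rs s \<inter> Rs t \<noteq> {}"
    then obtain e where "e \<in> Rs s" "e \<in> Rs t" by auto
    then have "e (Inl (t \<omega>, \<omega>)) < e (Inl (s \<omega>, \<omega>))" "e (Inl (s \<omega>, \<omega>)) < e (Inl (t \<omega>, \<omega>))"
      using w unfolding Rs_def by auto
    then show False by simp
  qed
qed

lemma AE_noties:
  "AE e in (Pi\<^sub>M UNIV (\<lambda>_. lborel::real measure)). \<forall>\<omega> a b. a \<noteq> b \<longrightarrow> e (Inl (a::'a::finite, \<omega>::'w::finite) :: ('a \<times> 'w) + ('a \<times> 'w)) \<noteq> e (Inl (b, \<omega>))"
proof -
  have "AE e in (Pi\<^sub>M UNIV (\<lambda>_. lborel::real measure)). a \<noteq> b \<longrightarrow> e (Inl (a::'a, \<omega>::'w) :: ('a \<times> 'w) + ('a \<times> 'w)) \<noteq> e (Inl (b, \<omega>))" for a b \<omega>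
  proof (cases "a = b")
    case True then show ?thesis by simp
  next
    case False
    have "{e. e (Inl (a, \<omega>) :: ('a \<times> 'w) + ('a \<times> 'w)) = e (Inl (b, \<omega>))} \<in> null_sets (Pi\<^sub>M UNIV (\<lambda>_. lborel::real measure))"
    proof -
      have "{e \<in> space (Pi\<^sub>M UNIV (\<lambda>_. lborel::real measure)). e (Inl (a, \<omega>) :: ('a \<times> 'w) + ('a \<times> 'w)) = e (Inl (b, \<omega>))} \<in> sets (Pi\<^sub>M UNIV (\<lambda>_. lborel::real measure))"
        by (intro borel_measurable_eq comp_meas)
      then show ?thesis using tie_null[of "Inl (a, \<omega>) :: ('a \<times> 'w) + ('a \<times> 'w)" "Inl (b, \<omega>)"] False
        by (intro null_setsI) (auto simp: space_PiM)
    qed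
    then show ?thesis by (rule AE_I') auto
  qed
  then show ?thesis by (intro eventually_all_finite) auto
qed


lemma cube_cover:
  assumes "e \<in> cube" "\<forall>\<omega> a b. a \<noteq> b \<longrightarrow> e (Inl (a::'a::finite, \<omega>::'w::finite) :: ('a \<times> 'w) + ('a \<times> 'w)) \<noteq> e (Inl (b, \<omega>))"
  shows "e \<in> (\<Union>s. Rs s)"
proof -
  have "\<exists>m. \<forall>b. e (Inl (b, \<omega>)) \<le> e (Inl (m, \<omega>))" for \<omega>
    using ex_argmax[of "\<lambda>b. e (Inl (b, \<omega>))"] by simp
  then obtain s where s: "\<And>\<omega> b. e (Inl (b, \<omega>)) \<le> e (Inl (s \<omega>, \<omega>))" by metis
  have "e \<in> Rs s"
    unfolding Rs_def using assms(1) s assms(2) by (auto simp: order.strict_iff_order)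
  then show ?thesis by blast
qed

lemma Rs_bound:
  fixes \<mu>0 :: "'w::finite \<Rightarrow> real" and s :: "'w \<Rightarrow> 'a::finite"
  shows "emeasure (Pi\<^sub>M UNIV (\<lambda>_. lborel::real measure)) (Rs s)
     \<le> of_nat (CARD('a) ^ CARD('a)) * emeasure (Pi\<^sub>M UNIV (\<lambda>_. lborel::real measure)) (felicitous_envs \<mu>0 \<inter> Rs s)"
proof -
  let ?M = "Pi\<^sub>M UNIV (\<lambda>_. lborel::real measure) :: (('a \<times> 'w) + ('a \<times> 'w) \<Rightarrow> real) measure"
  let ?X = "felicitous_envs \<mu>0 \<inter> Rs s"
  have X: "?X \<in> sets ?M" using felicitous_envs_sets Rs_sets by (intro sets.Int)
  have Xp: "(\<lambda>e. e \<circ> permI s c) -` ?X \<in> sets ?M" for c by (rule sets_perm[OF X])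
  have cov: "Rs s \<subseteq> (\<Union>c\<in>UNIV. (\<lambda>e. e \<circ> permI s c) -` ?X)"
  proof
    fix e assume e: "e \<in> Rs s"
    then obtain c where "e \<circ> permI s c \<in> felicitous_envs \<mu>0" using Rs_cover by blast
    moreover have "e \<circ> permI s c \<in> Rs s" using Rs_perm[OF e] .
    ultimately show "e \<in> (\<Union>c\<in>UNIV. (\<lambda>e. e \<circ> permI s c) -` ?X)" by blast
  qed
  have "emeasure ?M (Rs s) \<le> emeasure ?M (\<Union>c\<in>UNIV. (\<lambda>e. e \<circ> permI s c) -` ?X)"
    using cov by (intro emeasure_mono sets.finite_UN) (simp_all add: Xp del: vimage_Int)
  also have "\<dots> \<le> (\<Sum>c\<in>UNIV. emeasure ?M ((\<lambda>e. e \<circ> permI s c) -` ?X))"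
    by (intro emeasure_subadditive_finite) (simp_all add: Xp image_subset_iff del: vimage_Int)
  also have "\<dots> = (\<Sum>c\<in>(UNIV::('a \<Rightarrow> 'a) set). emeasure ?M ?X)"
    using X by (intro sum.cong refl emeasure_perm bij_permI)
  also have "\<dots> = of_nat (CARD('a) ^ CARD('a)) * emeasure ?M ?X"
    by (simp add: card_fun)
  finally show ?thesis .
qed


theorem lemma7:
  fixes \<mu>0 :: "'w::finite \<Rightarrow> real"
  assumes "\<forall>\<omega>. \<mu>0 \<omega> > 0"
    and "(\<Sum>\<omega>\<in>UNIV. \<mu>0 \<omega>) = 1"
  shows "emeasure (Pi\<^sub>M UNIV (\<lambda>_. lborel)) (felicitous_envs \<mu>0 :: (('a::finite \<times> 'w) + ('a \<times> 'w) \<Rightarrow> real) set)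
           \<ge> ennreal (1 / real (CARD('a) ^ CARD('a)))"
proof -
  let ?M = "Pi\<^sub>M UNIV (\<lambda>_. lborel::real measure) :: (('a \<times> 'w) + ('a \<times> 'w) \<Rightarrow> real) measure"
  let ?F = "felicitous_envs \<mu>0 :: (('a::finite \<times> 'w) + ('a \<times> 'w) \<Rightarrow> real) set"
  define N where "N = CARD('a) ^ CARD('a)"
  have Npos: "N > 0" unfolding N_def by simp
  have F: "?F \<in> sets ?M" by (rule felicitous_envs_sets)
  have Rsets: "Rs s \<in> sets ?M" for s :: "'w \<Rightarrow> 'a" by (rule Rs_sets)
  have URs: "(\<Union>s. Rs s) \<in> sets ?M"
    by (intro sets.finite_UN) (simp_all add: Rsets)
  have "(1::ennreal) = emeasure ?M cube" by (simp add: cube_measure)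
  also have "\<dots> \<le> emeasure ?M (\<Union>s. Rs s)"
  proof (rule emeasure_mono_AE[OF _ URs])
    show "AE x in ?M. x \<in> cube \<longrightarrow> x \<in> (\<Union>s::'w \<Rightarrow> 'a. Rs s)"
      using AE_noties[where 'a='a and 'w='w] by eventually_elim (use cube_cover in blast)
  qed
  also have "\<dots> = (\<Sum>s\<in>UNIV. emeasure ?M (Rs s))"
    by (rule sum_emeasure[symmetric]) (auto simp: Rsets Rs_disj)
  also have "\<dots> \<le> (\<Sum>s\<in>UNIV. of_nat N * emeasure ?M (?F \<inter> Rs s))"
    unfolding N_def by (intro sum_mono Rs_bound)
  also have "\<dots> = of_nat N * (\<Sum>s\<in>UNIV. emeasure ?M (?F \<inter> Rs s))"
    by (simp add: sum_distrib_left)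
  also have "(\<Sum>s\<in>UNIV. emeasure ?M (?F \<inter> Rs s)) = emeasure ?M (\<Union>s. ?F \<inter> Rs s)"
  proof (rule sum_emeasure)
    show "range (\<lambda>s. ?F \<inter> Rs s) \<subseteq> sets ?M" using F Rsets by auto
    show "disjoint_family_on (\<lambda>s. ?F \<inter> Rs s) UNIV"
      using Rs_disj[where 'a='a and 'w='w] unfolding disjoint_family_on_def by blast
  qed simp
  also have "\<dots> \<le> emeasure ?M ?F"
    by (intro emeasure_mono F) auto
  finally have le: "1 \<le> of_nat N * emeasure ?M ?F" by (simp add: mult_left_mono)
  have inv: "ennreal (1 / real N) * of_nat N = 1"
    using Npos by (simp add: ennreal_of_nat_eq_real_of_nat ennreal_mult''[symmetric])
  have "ennreal (1 / real N) = ennreal (1 / real N) * 1" by simp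
  also have "\<dots> \<le> ennreal (1 / real N) * (of_nat N * emeasure ?M ?F)"
    by (intro mult_left_mono le) simp
  also have "\<dots> = emeasure ?M ?F"
    by (simp add: mult.assoc[symmetric] inv)
  finally show ?thesis unfolding N_def by simp
qed

end
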